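(* If $v\in\mathfrak{S}_n$ is boolean with Robinson–Schensted shape $\lambda$, then $\mathbf{a}(v)=\lambda_2(v)$.
   Context: A permutation is boolean if its reduced words (in the simple reflections $\sigma_i=(i,i+1)$) have no repeated letters. $\lambda_2(v)$ is the length of the second row of the shape $\lambda$ of the tableaux assigned to $v$ by the Robinson–Schensted correspondence (zero if absent). Lusztig's $\mathbf{a}$-function on $\mathfrak{S}_n$ is the unique function constant on two-sided Kazhdan–Lusztig cells (sets of permutations with equal Robinson–Schensted shape) with $\mathbf{a}(w)=\ell(w)$ whenever $w$ is the longest element of a parabolic subgroup. *)

theory Defs
  imports "HOL-Combinatorics.Permutations"
begin

text \<open>Permutations of S_n are modelled as functions v with v permutes {..<n}
  (positions/values 0,...,n-1). The simple reflection sigma_i, i < n-1,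
  swaps i and i+1.\<close>

definition sref :: "nat \<Rightarrow> nat \<Rightarrow> nat" where
  "sref i = (\<lambda>x. if x = i then Suc i else if x = Suc i then i else x)"

definition word_perm :: "nat list \<Rightarrow> nat \<Rightarrow> nat" where
  "word_perm ws = foldr (\<lambda>i p. sref i \<circ> p) ws id"

definition is_word :: "nat \<Rightarrow> nat list \<Rightarrow> bool" where
  "is_word n ws \<longleftrightarrow> (\<forall>i \<in> set ws. Suc i < n)"

definition coxeter_length :: "nat \<Rightarrow> (nat \<Rightarrow> nat) \<Rightarrow> nat" where
  "coxeter_length n w = (LEAST k. \<exists>ws. is_word n ws \<and> length ws = k \<and> word_perm ws = w)"

definition reduced_word :: "nat \<Rightarrow> (nat \<Rightarrow> nat) \<Rightarrow> nat list \<Rightarrow> bool" where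
  "reduced_word n w ws \<longleftrightarrow> is_word n ws \<and> word_perm ws = w \<and> length ws = coxeter_length n w"

definition boolean_perm :: "nat \<Rightarrow> (nat \<Rightarrow> nat) \<Rightarrow> bool" where
  "boolean_perm n w \<longleftrightarrow> (\<forall>ws. reduced_word n w ws \<longrightarrow> distinct ws)"

definition parabolic :: "nat \<Rightarrow> nat set \<Rightarrow> (nat \<Rightarrow> nat) set" where
  "parabolic n J = {word_perm ws | ws. is_word n ws \<and> set ws \<subseteq> J}"

definition longest_parabolic :: "nat \<Rightarrow> nat set \<Rightarrow> (nat \<Rightarrow> nat) \<Rightarrow> bool" where
  "longest_parabolic n J w \<longleftrightarrow> w \<in> parabolic n J \<and>
     (\<forall>u \<in> parabolic n J. coxeter_length n u \<le> coxeter_length n w)"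

text \<open>Robinson--Schensted row insertion (tableau = list of rows, each increasing).\<close>
fun row_insert :: "nat \<Rightarrow> nat list \<Rightarrow> nat list \<times> nat option" where
  "row_insert x [] = ([x], None)"
| "row_insert x (y # ys) =
     (if x < y then (x # ys, Some y)
      else (let (ys', b) = row_insert x ys in (y # ys', b)))"

fun rs_insert :: "nat \<Rightarrow> nat list list \<Rightarrow> nat list list" where
  "rs_insert x [] = [[x]]"
| "rs_insert x (r # rs) =
     (case row_insert x r of
        (r', None) \<Rightarrow> r' # rs
      | (r', Some y) \<Rightarrow> r' # rs_insert y rs)"

definition rs_P :: "nat \<Rightarrow> (nat \<Rightarrow> nat) \<Rightarrow> nat list list" where
  "rs_P n v = foldl (\<lambda>T x. rs_insert x T) [] (map v [0..<n])"

definition rs_shape :: "nat \<Rightarrow> (nat \<Rightarrow> nat) \<Rightarrow> nat list" where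
  "rs_shape n v = map length (rs_P n v)"

definition lambda2 :: "nat \<Rightarrow> (nat \<Rightarrow> nat) \<Rightarrow> nat" where
  "lambda2 n v = (if 2 \<le> length (rs_shape n v) then rs_shape n v ! 1 else 0)"

text \<open>The defining properties of Lusztig's a-function on S_n: constant on two-sided
  cells (equal RS shape) and equal to the length on longest elements of parabolic subgroups.\<close>
definition is_a_function :: "nat \<Rightarrow> ((nat \<Rightarrow> nat) \<Rightarrow> nat) \<Rightarrow> bool" where
  "is_a_function n a \<longleftrightarrow>
     (\<forall>v w. v permutes {..<n} \<longrightarrow> w permutes {..<n} \<longrightarrow>
        rs_shape n v = rs_shape n w \<longrightarrow> a v = a w) \<and>
     (\<forall>J w. J \<subseteq> {i. Suc i < n} \<longrightarrow> longest_parabolic n J w \<longrightarrow> a w = coxeter_length n w)"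

end

theory Submission
  imports Defs
begin


lemma foldr_wp: "foldr (\<lambda>i p. sref i \<circ> p) xs q = word_perm xs \<circ> q"
  by (induction xs arbitrary: q) (auto simp: word_perm_def)

lemma word_perm_Nil[simp]: "word_perm [] = id" by (simp add: word_perm_def)
lemma word_perm_Cons[simp]: "word_perm (i # xs) = sref i \<circ> word_perm xs"
  by (simp add: word_perm_def)
lemma word_perm_append: "word_perm (xs @ ys) = word_perm xs \<circ> word_perm ys"
  by (induction xs) auto

lemma sref_transpose: "sref i = Transposition.transpose i (Suc i)"
  by (auto simp: sref_def Transposition.transpose_def)

lemma sref_invol: "sref i \<circ> sref i = id"
  by (auto simp: sref_def)

lemma sref_permutes: "Suc i < n \<Longrightarrow> sref i permutes {..<n}"
  unfolding sref_transpose by (rule permutes_swap_id) auto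

lemma word_permutes: "is_word n ws \<Longrightarrow> word_perm ws permutes {..<n}"
proof (induction ws)
  case Nil then show ?case using permutes_id[of "{..<n}"] by (simp add: id_def)
next
  case (Cons i ws)
  then have "is_word n ws" "Suc i < n" by (auto simp: is_word_def)
  then show ?case unfolding word_perm_Cons using Cons permutes_compose[OF _ sref_permutes] by blast
qed

lemma transpose_word:
  assumes "a < b" "b < n"
  shows "\<exists>ws. is_word n ws \<and> word_perm ws = Transposition.transpose a b"
  using assms
proof (induction b)
  case 0 then show ?case by simp
next
  case (Suc c)
  show ?case
  proof (cases "a = c")
    case True
    then show ?thesis using Suc.prems
      by (intro exI[of _ "[a]"]) (auto simp: is_word_def sref_transpose)
  next
    case False
    then have "a < c" using Suc.prems by simp
    with Suc obtain ws where ws: "is_word n ws" "word_perm ws = Transposition.transpose a c" by auto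
    have "word_perm ([c] @ ws @ [c]) = Transposition.transpose a (Suc c)"
      using \<open>a < c\<close> by (auto simp: word_perm_append ws sref_def Transposition.transpose_def)
    moreover have "is_word n ([c] @ ws @ [c])" using ws Suc.prems by (auto simp: is_word_def)
    ultimately show ?thesis by blast
  qed
qed

lemma perm_word:
  assumes "v permutes {..<n}"
  shows "\<exists>ws. is_word n ws \<and> word_perm ws = v"
  using assms finite_lessThan
proof (induction rule: permutes_induct)
  case id then show ?case by (intro exI[of _ "[]"]) (auto simp: is_word_def)
next
  case (swap a b p)
  then obtain ws where ws: "is_word n ws" "word_perm ws = p" by auto
  have "\<exists>ts. is_word n ts \<and> word_perm ts = Transposition.transpose a b"
  proof (cases "a < b")
    case True then show ?thesis using transpose_word swap by auto
  next
    case False then have "b < a" using swap by auto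
    then obtain ts where "is_word n ts" "word_perm ts = Transposition.transpose b a"
      using transpose_word[of b a n] swap by auto
    then show ?thesis using transpose_commute[of a b] by metis
  qed
  then obtain ts where "is_word n ts" "word_perm ts = Transposition.transpose a b" by auto
  then show ?case using ws
    by (intro exI[of _ "ts @ ws"]) (auto simp: word_perm_append is_word_def)
qed

lemma reduced_exists:
  assumes "v permutes {..<n}"
  shows "\<exists>ws. reduced_word n v ws"
proof -
  obtain ws where "is_word n ws" "word_perm ws = v" using perm_word assms by blast
  then have "\<exists>k ws. is_word n ws \<and> length ws = k \<and> word_perm ws = v" by blast
  from LeastI_ex[OF this] show ?thesis
    unfolding reduced_word_def coxeter_length_def by blast
qed

lemma sref_pres: "j \<noteq> i \<Longrightarrow> (sref j x \<le> i \<longleftrightarrow> x \<le> i)"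
  by (auto simp: sref_def)

lemma word_pres: "i \<notin> set ws \<Longrightarrow> (word_perm ws x \<le> i \<longleftrightarrow> x \<le> i)"
  by (induction ws arbitrary: x) (auto simp: sref_pres)

lemma sref_inj: "inj (sref i)"
  by (auto simp: inj_def sref_def split: if_splits)

lemma word_inj: "inj (word_perm ws)"
proof (induction ws)
  case Nil then show ?case by simp
next
  case (Cons i ws) show ?case unfolding word_perm_Cons by (rule inj_compose[OF sref_inj[of i] Cons.IH])
qed

definition F321 :: "nat \<Rightarrow> (nat \<Rightarrow> nat) \<Rightarrow> bool" where
  "F321 n f \<longleftrightarrow> (\<forall>a b c. a < b \<longrightarrow> b < c \<longrightarrow> c < n \<longrightarrow> \<not> (f c < f b \<and> f b < f a))"

lemma F321_word:
  assumes "distinct ws"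
  shows "F321 n (word_perm ws)"
  using assms
proof (induction ws)
  case Nil then show ?case by (auto simp: F321_def)
next
  case (Cons i ws)
  let ?u = "word_perm ws"
  have IH: "F321 n ?u" and ni: "i \<notin> set ws" using Cons by auto
  have pres: "\<And>x. ?u x \<le> i \<longleftrightarrow> x \<le> i" using word_pres[OF ni] .
  have inj: "\<And>x y. ?u x = ?u y \<Longrightarrow> x = y" using injD[OF word_inj] by blast
  show ?case unfolding F321_def word_perm_Cons comp_apply
  proof (intro allI impI notI)
    fix a b c assume abc: "a < b" "b < c" "c < n"
      and h: "sref i (?u c) < sref i (?u b) \<and> sref i (?u b) < sref i (?u a)"
    have d: "?u a \<noteq> ?u b" "?u b \<noteq> ?u c" "?u a \<noteq> ?u c" using inj abc by (metis less_irrefl less_trans)+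
    have pa: "?u a \<le> i \<longleftrightarrow> a \<le> i" and pb: "?u b \<le> i \<longleftrightarrow> b \<le> i" and pc: "?u c \<le> i \<longleftrightarrow> c \<le> i"
      using pres by auto
    have "\<not> (?u c < ?u b \<and> ?u b < ?u a)" using IH abc by (auto simp: F321_def)
    then show False using h d pa pb pc abc unfolding sref_def
      by (auto split: if_splits)
  qed
qed



definition step :: "nat list \<times> nat list \<Rightarrow> nat \<Rightarrow> nat list \<times> nat list" where
  "step s x = (case row_insert x (fst s) of (r', None) \<Rightarrow> (r', snd s) | (r', Some y) \<Rightarrow> (r', snd s @ [y]))"

abbreviation "ins \<equiv> (\<lambda>T x. rs_insert x T)"

lemma foldl_G:
  "foldl ins (r # foldl ins T B0) xs = (case foldl step (r, B0) xs of (r', bs) \<Rightarrow> r' # foldl ins T bs)"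
proof (induction xs arbitrary: r B0)
  case Nil then show ?case by simp
next
  case (Cons x xs)
  obtain r1 b where rb: "row_insert x r = (r1, b)" by fastforce
  show ?case
  proof (cases b)
    case None
    then show ?thesis using Cons.IH[of r1 B0] rb by (simp add: step_def)
  next
    case (Some y)
    have "rs_insert x (r # foldl ins T B0) = r1 # foldl ins T (B0 @ [y])"
      using rb Some by simp
    then show ?thesis using Cons.IH[of r1 "B0 @ [y]"] rb Some by (simp add: step_def)
  qed
qed

lemma foldl_top:
  "foldl ins [] xs = (if xs = [] then [] else case foldl step ([],[]) xs of (r', bs) \<Rightarrow> r' # foldl ins [] bs)"
proof (cases xs)
  case Nil then show ?thesis by simp
next
  case (Cons x xs')
  have "foldl ins [] xs = foldl ins ([x] # foldl ins [] []) xs'" using Cons by simp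
  also have "\<dots> = (case foldl step ([x], []) xs' of (r', bs) \<Rightarrow> r' # foldl ins [] bs)"
    by (rule foldl_G)
  also have "foldl step ([x], []) xs' = foldl step ([],[]) xs" using Cons by (simp add: step_def)
  finally show ?thesis using Cons by simp
qed

lemma row_insert_big: "(\<forall>y\<in>set R. y < x) \<Longrightarrow> row_insert x R = (R @ [x], None)"
  by (induction R) auto

lemma row_insert_cases:
  "row_insert x R = (R', b) \<Longrightarrow>
    (b = None \<and> R' = R @ [x] \<and> (\<forall>y\<in>set R. y \<le> x)) \<or>
    (\<exists>p<length R. b = Some (R!p) \<and> x < R!p \<and> R' = R[p := x] \<and> (\<forall>j<p. R!j \<le> x))"
proof (induction R arbitrary: R' b)
  case Nil then show ?case by simp
next
  case (Cons y ys)
  show ?case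
  proof (cases "x < y")
    case True then show ?thesis using Cons.prems by (intro disjI2 exI[of _ 0]) auto
  next
    case False
    obtain ys' b' where yb: "row_insert x ys = (ys', b')" by fastforce
    then have e: "R' = y # ys'" "b = b'" using Cons.prems False by auto
    from Cons.IH[OF yb] show ?thesis
    proof
      assume "b' = None \<and> ys' = ys @ [x] \<and> (\<forall>y\<in>set ys. y \<le> x)"
      then show ?thesis using e False by auto
    next
      assume "\<exists>p<length ys. b' = Some (ys!p) \<and> x < ys!p \<and> ys' = ys[p := x] \<and> (\<forall>j<p. ys!j \<le> x)"
      then obtain p where p: "p<length ys" "b' = Some (ys!p)" "x < ys!p" "ys' = ys[p := x]" "\<forall>j<p. ys!j \<le> x"
        by blast
      show ?thesis
      proof (intro disjI2 exI[of _ "Suc p"] conjI)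
        show "\<forall>j<Suc p. (y#ys)!j \<le> x" using p(5) False by (auto simp: less_Suc_eq_0_disj)
      qed (use p e in auto)
    qed
  qed
qed

lemma sorted_fold: "sorted_wrt (<) B \<Longrightarrow> foldl step ([],[]) B = (B, [])"
proof (induction B rule: rev_induct)
  case Nil then show ?case by simp
next
  case (snoc x xs)
  then have "foldl step ([],[]) xs = (xs, [])" "\<forall>y\<in>set xs. y < x"
    by (auto simp: sorted_wrt_append)
  then have "foldl step ([],[]) (xs @ [x]) = step (xs, []) x" by simp
  also have "\<dots> = (xs @ [x], [])" using snoc.prems \<open>\<forall>y\<in>set xs. y < x\<close>
    by (simp add: step_def row_insert_big)
  finally show ?case .
qed

definition shapeof :: "nat \<Rightarrow> nat \<Rightarrow> nat list" where
  "shapeof n k = (if n = 0 then [] else if k = 0 then [n] else [n - k, k])"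

lemma shape_from_state:
  assumes "foldl step ([],[]) xs = (R, B)" "sorted_wrt (<) B" "length R + length B = length xs"
  shows "map length (foldl ins [] xs) = shapeof (length xs) (length B)"
proof -
  have B: "foldl ins [] B = (if B = [] then [] else [B])"
    using foldl_top[of B] sorted_fold[OF assms(2)] by simp
  show ?thesis using foldl_top[of xs] assms(1,3) B by (auto simp: shapeof_def)
qed

lemma lambda2_shapeof: "rs_shape n v = shapeof n k \<Longrightarrow> lambda2 n v = (if n = 0 then 0 else k)"
  by (auto simp: lambda2_def shapeof_def)



definition has21 :: "nat list \<Rightarrow> nat \<Rightarrow> bool" where
  "has21 pre z \<longleftrightarrow> (\<exists>i j. i < j \<and> j < length pre \<and> pre!j < pre!i \<and> z \<le> pre!j)"

definition free321 :: "nat list \<Rightarrow> bool" where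
  "free321 xs \<longleftrightarrow> (\<forall>i j k. i < j \<longrightarrow> j < k \<longrightarrow> k < length xs \<longrightarrow> \<not> (xs!k < xs!j \<and> xs!j < xs!i))"

definition Inv :: "nat list \<Rightarrow> nat list \<times> nat list \<Rightarrow> bool" where
  "Inv pre s \<longleftrightarrow> (let R = fst s; B = snd s in
     sorted_wrt (<) R \<and> sorted_wrt (<) B \<and> set R \<subseteq> set pre \<and> set B \<subseteq> set pre \<and>
     set R \<inter> set B = {} \<and>
     length R + length B = length pre \<and> length B \<le> length R \<and>
     (\<forall>j<length B. R!j < B!j) \<and>
     (B \<noteq> [] \<longrightarrow> (\<forall>z\<in>set R. z < last B \<longrightarrow> has21 pre z)))"

lemma has21_mono: "has21 xs z \<Longrightarrow> has21 (xs @ ys) z"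
proof -
  assume "has21 xs z"
  then obtain i j where ij: "i < j" "j < length xs" "xs!j < xs!i" "z \<le> xs!j" unfolding has21_def by blast
  then have "(xs @ ys)!j = xs!j" "(xs @ ys)!i = xs!i" by (simp_all add: nth_append)
  then show ?thesis unfolding has21_def using ij by (intro exI[of _ i] exI[of _ j]) auto
qed

lemma free321_prefix: "free321 (xs @ ys) \<Longrightarrow> free321 xs"
  unfolding free321_def
proof (intro allI impI)
  fix i j k assume h: "\<forall>i j k. i < j \<longrightarrow> j < k \<longrightarrow> k < length (xs @ ys) \<longrightarrow> \<not> ((xs @ ys)!k < (xs @ ys)!j \<and> (xs @ ys)!j < (xs @ ys)!i)"
    and ijk: "i < j" "j < k" "k < length xs"
  have "(xs @ ys)!k = xs!k" "(xs @ ys)!j = xs!j" "(xs @ ys)!i = xs!i" using ijk by (simp_all add: nth_append)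
  then show "\<not> (xs!k < xs!j \<and> xs!j < xs!i)" using h[rule_format, of i j k] ijk by simp
qed

lemma sorted_last: "sorted_wrt (<) (B::nat list) \<Longrightarrow> b \<in> set B \<Longrightarrow> b \<le> last B"
proof (induction B rule: rev_induct)
  case Nil then show ?case by simp
next
  case (snoc x xs) then show ?case by (auto simp: sorted_wrt_append less_imp_le)
qed

lemma last_nth_le: "sorted_wrt (<) (B::nat list) \<Longrightarrow> j < length B \<Longrightarrow> B!j \<le> last B"
  using sorted_last nth_mem by blast

lemma inv_step:
  assumes inv: "Inv xs (R, B)" and dist: "a \<notin> set xs" and fr: "free321 (xs @ [a])"
  shows "Inv (xs @ [a]) (step (R, B) a)"
proof -
  from inv have sR: "sorted_wrt (<) R" and sB: "sorted_wrt (<) B" and RX: "set R \<subseteq> set xs"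
    and BX: "set B \<subseteq> set xs" and disj: "set R \<inter> set B = {}" and len: "length R + length B = length xs"
    and lBR: "length B \<le> length R" and col: "\<forall>j<length B. R!j < B!j"
    and h21: "B \<noteq> [] \<Longrightarrow> \<forall>z\<in>set R. z < last B \<longrightarrow> has21 xs z"
    unfolding Inv_def by (auto simp: Let_def)
  have sRn: "\<And>i j. i < j \<Longrightarrow> j < length R \<Longrightarrow> R!i < R!j" using sR by (simp add: sorted_wrt_iff_nth_less)
  have aR: "a \<notin> set R" using RX dist by auto
  obtain R' b where rb: "row_insert a R = (R', b)" by fastforce
  from row_insert_cases[OF rb] show ?thesis
  proof
    assume c: "b = None \<and> R' = R @ [a] \<and> (\<forall>y\<in>set R. y \<le> a)"
    then have st: "step (R, B) a = (R @ [a], B)" using rb by (simp add: step_def)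
    have lt: "\<forall>y\<in>set R. y < a"
    proof
      fix y assume "y \<in> set R" then show "y < a" using c aR by (cases "y = a") auto
    qed
    have aB: "a \<notin> set B" using BX dist by auto
    show ?thesis unfolding st Inv_def Let_def fst_conv snd_conv
    proof (intro conjI)
      show "sorted_wrt (<) (R @ [a])" using sR lt by (simp add: sorted_wrt_append)
      show "\<forall>j<length B. (R @ [a]) ! j < B ! j" using col lBR by (auto simp: nth_append)
      show "B \<noteq> [] \<longrightarrow> (\<forall>z\<in>set (R @ [a]). z < last B \<longrightarrow> has21 (xs @ [a]) z)"
      proof (intro impI ballI)
        fix z assume Bn: "B \<noteq> []" and z: "z \<in> set (R @ [a])" and zl: "z < last B"
        show "has21 (xs @ [a]) z"
        proof (cases "z \<in> set R")
          case True then show ?thesis using h21[OF Bn] zl has21_mono by blast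
        next
          case False
          then have za: "z = a" using z by auto
          have "last B \<in> set xs" using BX Bn by auto
          then obtain i where i: "i < length xs" "xs!i = last B" by (auto simp: in_set_conv_nth)
          show ?thesis unfolding has21_def
            by (rule exI[of _ i], rule exI[of _ "length xs"]) (use i za zl in \<open>auto simp: nth_append\<close>)
        qed
      qed
    qed (use sB RX BX disj len lBR aB in auto)
  next
    assume "\<exists>p<length R. b = Some (R!p) \<and> a < R!p \<and> R' = R[p := a] \<and> (\<forall>j<p. R!j \<le> a)"
    then obtain p where p: "p < length R" "b = Some (R!p)" "a < R!p" "R' = R[p := a]" "\<forall>j<p. R!j \<le> a"
      by blast
    define y where "y = R!p"
    have st: "step (R, B) a = (R[p := a], B @ [y])" using rb p by (simp add: step_def y_def)
    have yR: "y \<in> set R" using p y_def by simp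
    have yX: "y \<in> set xs" using yR RX by auto
    have pj: "\<forall>j<p. R!j < a" using p(5) aR p(1) by (metis less_trans nth_mem order_le_neq_trans)
    have ygt: "B \<noteq> [] \<Longrightarrow> last B < y"
    proof -
      assume Bn: "B \<noteq> []"
      have "y \<noteq> last B" using yR disj Bn by auto
      moreover have "\<not> y < last B"
      proof
        assume "y < last B"
        then have "has21 xs y" using h21[OF Bn] yR by auto
        then obtain i j where ij: "i < j" "j < length xs" "xs!j < xs!i" "y \<le> xs!j"
          unfolding has21_def by blast
        have "(xs@[a])!(length xs) < (xs@[a])!j \<and> (xs@[a])!j < (xs@[a])!i"
          using ij p(3) y_def by (auto simp: nth_append)
        moreover have "j < length (xs @ [a])" "length xs < length (xs @ [a])" using ij by auto
        ultimately show False using fr[unfolded free321_def, rule_format, of i j "length xs"] ij by blast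
      qed
      ultimately show "last B < y" by simp
    qed
    have pB: "length B \<le> p"
    proof (rule ccontr)
      assume "\<not> length B \<le> p"
      then have "p < length B" by simp
      then have "R!p < B!p" "B!p \<le> last B" using col last_nth_le[OF sB] by auto
      moreover have "B \<noteq> []" using \<open>p < length B\<close> by auto
      then have "last B < y" using ygt by blast
      ultimately show False using y_def by simp
    qed
    have setR': "set (R[p := a]) \<subseteq> insert a (set R)" by (rule set_update_subset_insert)
    have mem': "\<And>z. z \<in> set (R[p := a]) \<Longrightarrow> z = a \<or> (\<exists>m<length R. m \<noteq> p \<and> z = R!m)"
    proof -
      fix z assume "z \<in> set (R[p := a])"
      then obtain i where i: "i < length R" "z = R[p := a] ! i" by (auto simp: in_set_conv_nth)
      show "z = a \<or> (\<exists>m<length R. m \<noteq> p \<and> z = R!m)"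
      proof (cases "i = p")
        case True then show ?thesis using i by simp
      next
        case False then show ?thesis using i by auto
      qed
    qed
    show ?thesis unfolding st Inv_def Let_def fst_conv snd_conv
    proof (intro conjI)
      show "sorted_wrt (<) (R[p := a])"
        unfolding sorted_wrt_iff_nth_less
      proof (intro allI impI)
        fix i j assume ij: "i < j" "j < length (R[p := a])"
        show "R[p := a] ! i < R[p := a] ! j"
        proof (cases "i = p")
          case True
          then have "j \<noteq> p" "p < j" using ij by auto
          then show ?thesis using True ij sRn[of p j] p(1,3) by simp
        next
          case False
          show ?thesis
          proof (cases "j = p")
            case True then show ?thesis using False ij pj p(1) by simp
          next
            case False2: False
            then show ?thesis using False ij sRn[of i j] by simp
          qed
        qed
      qed
      show "sorted_wrt (<) (B @ [y])"
        using sB ygt sorted_last[OF sB] by (auto simp: sorted_wrt_append) (metis empty_iff le_less_trans list.set(1))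
      show "set (R[p := a]) \<subseteq> set (xs @ [a])" using setR' RX by auto
      show "set (B @ [y]) \<subseteq> set (xs @ [a])" using BX yX by auto
      show "set (R[p := a]) \<inter> set (B @ [y]) = {}"
      proof -
        have "a \<notin> set B" using BX dist by auto
        moreover have "a \<noteq> y" using p(3) y_def by simp
        moreover have "\<And>m. m<length R \<Longrightarrow> m \<noteq> p \<Longrightarrow> R!m \<noteq> y"
          using sRn y_def p(1) by (metis less_irrefl nat_neq_iff)
        moreover have "\<And>m. m<length R \<Longrightarrow> R!m \<notin> set B" using disj by (metis disjoint_iff nth_mem)
        ultimately show ?thesis using mem' by (simp add: disjoint_iff) blast
      qed
      show "length (R[p := a]) + length (B @ [y]) = length (xs @ [a])" using len by simp
      show "length (B @ [y]) \<le> length (R[p := a])" using pB p(1) by simp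
      show "\<forall>j<length (B @ [y]). R[p := a] ! j < (B @ [y]) ! j"
      proof (intro allI impI)
        fix j assume j: "j < length (B @ [y])"
        show "R[p := a] ! j < (B @ [y]) ! j"
        proof (cases "j < length B")
          case True then show ?thesis using col pB p(1) by (auto simp: nth_append nth_list_update)
        next
          case False
          then have "j = length B" using j by simp
          then show ?thesis using pB p(1,3) sRn[of j p] y_def lBR
            by (cases "j = p") (auto simp: nth_append nth_list_update)
        qed
      qed
      show "B @ [y] \<noteq> [] \<longrightarrow> (\<forall>z\<in>set (R[p := a]). z < last (B @ [y]) \<longrightarrow> has21 (xs @ [a]) z)"
      proof (intro impI ballI)
        fix z assume z: "z \<in> set (R[p := a])" and zl: "z < last (B @ [y])"
        have za: "z \<le> a"
          using mem'[OF z]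
        proof
          assume "\<exists>m<length R. m \<noteq> p \<and> z = R!m"
          then obtain m where m: "m < length R" "m \<noteq> p" "z = R!m" by blast
          have "m < p"
          proof (rule ccontr)
            assume "\<not> m < p" then have "p < m" using m by simp
            then have "R!p < R!m" using sRn m by simp
            then show False using zl m y_def by simp
          qed
          then show "z \<le> a" using pj m by fastforce
        qed simp
        obtain i where i: "i < length xs" "xs!i = y" using yX by (auto simp: in_set_conv_nth)
        show "has21 (xs @ [a]) z" unfolding has21_def
          by (rule exI[of _ i], rule exI[of _ "length xs"]) (use i za p(3) y_def in \<open>auto simp: nth_append\<close>)
      qed
    qed
  qed
qed

lemma inv_fold:
  "distinct xs \<Longrightarrow> free321 xs \<Longrightarrow> Inv xs (foldl step ([],[]) xs)"
proof (induction xs rule: rev_induct)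
  case Nil then show ?case by (simp add: Inv_def)
next
  case (snoc a xs)
  then have "Inv xs (foldl step ([],[]) xs)" using free321_prefix by auto
  moreover obtain R B where "foldl step ([],[]) xs = (R, B)" by fastforce
  ultimately show ?case using inv_step[of xs R B a] snoc.prems by auto
qed



definition wk :: "nat \<Rightarrow> nat \<Rightarrow> nat" where
  "wk k = word_perm (map (\<lambda>j. 2*j) [0..<k])"

definition wkf :: "nat \<Rightarrow> nat \<Rightarrow> nat" where
  "wkf k x = (if x < 2*k then (if even x then Suc x else x - 1) else x)"

lemma wk_explicit: "wk k = wkf k"
proof (induction k)
  case 0 then show ?case by (auto simp: wk_def wkf_def)
next
  case (Suc k)
  have "wk (Suc k) = wk k \<circ> sref (2*k)" by (simp add: wk_def word_perm_append)
  also have "\<dots> = wkf (Suc k)"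
  proof
    fix x show "(wk k \<circ> sref (2*k)) x = wkf (Suc k) x"
    proof (cases "x = 2*k")
      case True then show ?thesis by (simp add: Suc.IH wkf_def sref_def)
    next
      case F1: False
      show ?thesis
      proof (cases "x = Suc (2*k)")
        case True then show ?thesis by (simp add: Suc.IH wkf_def sref_def)
      next
        case False
        then have "sref (2*k) x = x" using F1 by (simp add: sref_def)
        moreover have "wkf k x = wkf (Suc k) x" using F1 False by (simp add: wkf_def)
        ultimately show ?thesis by (simp add: Suc.IH)
      qed
    qed
  qed
  finally show ?case .
qed

lemma row_insert_last_bump:
  "(\<forall>z\<in>set R. z < x) \<Longrightarrow> x < y \<Longrightarrow> row_insert x (R @ [y]) = (R @ [x], Some y)"
  by (induction R) auto

definition evens :: "nat \<Rightarrow> nat list" where "evens j = map (\<lambda>i. 2*i) [0..<j]"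
definition odds :: "nat \<Rightarrow> nat list" where "odds j = map (\<lambda>i. 2*i+1) [0..<j]"

lemma phase1: "j \<le> k \<Longrightarrow> foldl step ([],[]) (map (wkf k) [0..<2*j]) = (evens j, odds j)"
proof (induction j)
  case 0 then show ?case by (simp add: evens_def odds_def)
next
  case (Suc j)
  have up: "[0..<2 * Suc j] = [0..<2*j] @ [2*j, Suc (2*j)]" by simp
  have m: "map (wkf k) [2*j, Suc (2*j)] = [Suc (2*j), 2*j]" using Suc.prems by (auto simp: wkf_def)
  have lt: "\<forall>z\<in>set (evens j). z < Suc (2*j)" "\<forall>z\<in>set (evens j). z < 2*j" by (auto simp: evens_def)
  have "foldl step ([],[]) (map (wkf k) [0..<2 * Suc j]) = foldl step (evens j, odds j) [Suc (2*j), 2*j]"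
    unfolding up map_append foldl_append m using Suc by simp
  also have "\<dots> = step (evens j @ [Suc (2*j)], odds j) (2*j)"
    using lt by (simp add: step_def row_insert_big)
  also have "\<dots> = (evens j @ [2*j], odds j @ [Suc (2*j)])"
    using lt by (simp add: step_def row_insert_last_bump)
  also have "\<dots> = (evens (Suc j), odds (Suc j))" by (simp add: evens_def odds_def)
  finally show ?case .
qed

lemma phase2: "2*k \<le> m \<Longrightarrow> foldl step (evens k, odds k) (map (wkf k) [2*k..<m]) = (evens k @ [2*k..<m], odds k)"
proof (induction m)
  case 0 then show ?case by simp
next
  case (Suc m)
  show ?case
  proof (cases "2*k = Suc m")
    case True then show ?thesis by simp
  next
    case False
    then have le: "2*k \<le> m" using Suc.prems by simp
    have lt: "\<forall>z\<in>set (evens k @ [2*k..<m]). z < m" using le by (auto simp: evens_def)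
    have "foldl step (evens k, odds k) (map (wkf k) [2*k..<Suc m])
        = step (evens k @ [2*k..<m], odds k) m"
      using Suc.IH[OF le] le \<open>2*k \<noteq> Suc m\<close> by (simp add: wkf_def[of k m])
    also have "\<dots> = (evens k @ [2*k..<Suc m], odds k)"
      using lt le by (simp add: step_def row_insert_big)
    finally show ?thesis .
  qed
qed

lemma wk_state: "2*k \<le> n \<Longrightarrow> foldl step ([],[]) (map (wk k) [0..<n]) = (evens k @ [2*k..<n], odds k)"
proof -
  assume a: "2*k \<le> n"
  have "[0..<n] = [0..<2*k] @ [2*k..<n]" using a
    using upt_add_eq_append[of 0 "2*k" "n - 2*k"] by simp
  then show ?thesis using phase1[of k k] phase2[OF a] by (simp add: wk_explicit)
qed

lemma wk_shape: "2*k \<le> n \<Longrightarrow> rs_shape n (wk k) = shapeof n k"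
proof -
  assume a: "2*k \<le> n"
  have s: "sorted_wrt (<) (odds k)" by (simp add: odds_def sorted_wrt_iff_nth_less)
  have "map length (foldl ins [] (map (wk k) [0..<n])) = shapeof (length (map (wk k) [0..<n])) (length (odds k))"
    by (rule shape_from_state[OF wk_state[OF a] s]) (use a in \<open>simp add: evens_def odds_def\<close>)
  then show ?thesis by (simp add: rs_shape_def rs_P_def odds_def)
qed

lemma v_shape:
  assumes "v permutes {..<n}" "F321 n v"
  shows "\<exists>k. 2*k \<le> n \<and> rs_shape n v = shapeof n k \<and> lambda2 n v = k"
proof -
  let ?xs = "map v [0..<n]"
  have d: "distinct ?xs" using permutes_inj[OF assms(1)]
    by (simp add: distinct_map inj_on_def inj_def)
  have f: "free321 ?xs" unfolding free321_def
  proof (intro allI impI)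
    fix i j l assume ijl: "i < j" "j < l" "l < length ?xs"
    then have "?xs!i = v i" "?xs!j = v j" "?xs!l = v l" by simp_all
    then show "\<not> (?xs!l < ?xs!j \<and> ?xs!j < ?xs!i)"
      using assms(2)[unfolded F321_def, rule_format, of i j l] ijl by simp
  qed
  obtain R B where st: "foldl step ([],[]) ?xs = (R, B)" by fastforce
  have I: "Inv ?xs (R, B)" using inv_fold[OF d f] st by simp
  then have sB: "sorted_wrt (<) B" and len: "length R + length B = n" and le: "length B \<le> length R"
    unfolding Inv_def by (auto simp: Let_def)
  have sh: "rs_shape n v = shapeof n (length B)"
    using shape_from_state[OF st sB] len by (simp add: rs_shape_def rs_P_def)
  show ?thesis
    by (rule exI[of _ "length B"]) (use sh le len lambda2_shapeof[OF sh] in auto)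
qed

lemma sref_comm: "i \<noteq> j \<Longrightarrow> Suc i \<noteq> j \<Longrightarrow> Suc j \<noteq> i \<Longrightarrow> sref i \<circ> sref j = sref j \<circ> sref i"
  by (rule ext) (simp add: sref_def)

lemma comm_word: "(\<forall>j\<in>set us. sref i \<circ> sref j = sref j \<circ> sref i) \<Longrightarrow>
    sref i \<circ> word_perm us = word_perm us \<circ> sref i"
proof (induction us)
  case Nil then show ?case by simp
next
  case (Cons j us)
  have c1: "sref i \<circ> sref j = sref j \<circ> sref i" using Cons.prems by (meson list.set_intros(1))
  have "\<forall>j\<in>set us. sref i \<circ> sref j = sref j \<circ> sref i" using Cons.prems by (meson list.set_intros(2))
  then have c2: "sref i \<circ> word_perm us = word_perm us \<circ> sref i" by (rule Cons.IH)
  from c1 c2 have h1: "\<And>x. sref i (sref j x) = sref j (sref i x)" and h2: "\<And>x. sref i (word_perm us x) = word_perm us (sref i x)"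
    by (metis comp_apply)+
  show ?case
  proof
    fix x
    have "sref i (sref j (word_perm us x)) = sref j (sref i (word_perm us x))" by (rule h1)
    also have "\<dots> = sref j (word_perm us (sref i x))" by (simp only: h2)
    finally show "(sref i \<circ> word_perm (j # us)) x = (word_perm (j # us) \<circ> sref i) x" by simp
  qed
qed

lemma reduce_word:
  "(\<forall>i\<in>set ws. \<forall>j\<in>set ws. sref i \<circ> sref j = sref j \<circ> sref i) \<Longrightarrow>
    \<exists>ds. distinct ds \<and> set ds \<subseteq> set ws \<and> word_perm ds = word_perm ws"
proof (induction ws)
  case Nil then show ?case by (intro exI[of _ "[]"]) simp
next
  case (Cons i ws)
  have "\<forall>i\<in>set ws. \<forall>j\<in>set ws. sref i \<circ> sref j = sref j \<circ> sref i"
  proof (intro ballI)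
    fix a b assume "a \<in> set ws" "b \<in> set ws"
    then have "a \<in> set (i # ws)" "b \<in> set (i # ws)" by simp_all
    then show "sref a \<circ> sref b = sref b \<circ> sref a" using bspec[OF bspec[OF Cons.prems]] by blast
  qed
  from Cons.IH[OF this] obtain ds where ds: "distinct ds" "set ds \<subseteq> set ws" "word_perm ds = word_perm ws"
    by blast
  show ?case
  proof (cases "i \<in> set ds")
    case False
    then have "distinct (i # ds)" "set (i # ds) \<subseteq> set (i # ws)" "word_perm (i # ds) = word_perm (i # ws)"
      using ds by auto
    then show ?thesis by blast
  next
    case True
    then obtain us vs where uv: "ds = us @ i # vs" by (meson split_list)
    have c: "\<forall>j\<in>set us. sref i \<circ> sref j = sref j \<circ> sref i"
    proof
      fix j assume "j \<in> set us"
      then have "i \<in> set (i # ws)" "j \<in> set (i # ws)" using uv ds(2) by auto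
      then show "sref i \<circ> sref j = sref j \<circ> sref i" using bspec[OF bspec[OF Cons.prems]] by blast
    qed
    have "word_perm (i # ws) = sref i \<circ> word_perm ds" by (simp only: word_perm_Cons ds(3))
    also have "\<dots> = (sref i \<circ> word_perm us) \<circ> sref i \<circ> word_perm vs"
      by (simp only: uv word_perm_append word_perm_Cons comp_assoc)
    also have "\<dots> = (word_perm us \<circ> sref i) \<circ> sref i \<circ> word_perm vs"
      by (simp only: comm_word[OF c])
    also have "\<dots> = word_perm us \<circ> (sref i \<circ> sref i) \<circ> word_perm vs"
      by (simp only: comp_assoc)
    also have "\<dots> = word_perm (us @ vs)" by (simp add: sref_invol word_perm_append)
    finally have e: "word_perm (us @ vs) = word_perm (i # ws)" by simp
    have "distinct (us @ vs)" using ds(1) uv by simp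
    moreover have "set (us @ vs) \<subseteq> set (i # ws)" using ds(2) uv by auto
    ultimately show ?thesis using e by blast
  qed
qed

lemma cl_le: "is_word n ws \<Longrightarrow> word_perm ws = u \<Longrightarrow> coxeter_length n u \<le> length ws"
  unfolding coxeter_length_def by (rule Least_le) blast

lemma cl_wk: "2*k \<le> n \<Longrightarrow> coxeter_length n (wk k) = k"
proof -
  assume a: "2*k \<le> n"
  have w: "is_word n (map (\<lambda>j. 2*j) [0..<k])" using a by (auto simp: is_word_def)
  have le: "coxeter_length n (wk k) \<le> k" using cl_le[OF w] by (simp add: wk_def)
  have ws: "is_word n (map (\<lambda>j. 2*j) [0..<k])" "word_perm (map (\<lambda>j. 2*j) [0..<k]) = wk k"
    using w by (simp_all add: wk_def)
  then have "\<exists>m ws. is_word n ws \<and> length ws = m \<and> word_perm ws = wk k" by blast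
  from LeastI_ex[OF this] obtain rs where rs: "is_word n rs" "length rs = coxeter_length n (wk k)" "word_perm rs = wk k"
    unfolding coxeter_length_def by blast
  have sub: "(\<lambda>j. 2*j) ` {..<k} \<subseteq> set rs"
  proof
    fix x assume "x \<in> (\<lambda>j. 2*j) ` {..<k}"
    then obtain j where j: "j < k" "x = 2*j" by auto
    show "x \<in> set rs"
    proof (rule ccontr)
      assume "x \<notin> set rs"
      then have "word_perm rs x \<le> x \<longleftrightarrow> x \<le> x" by (rule word_pres)
      then show False using rs(3) j by (simp add: wk_explicit wkf_def)
    qed
  qed
  have "k = card ((\<lambda>j. 2*j) ` {..<k})" by (simp add: card_image inj_on_def)
  also have "\<dots> \<le> card (set rs)" using sub by (simp add: card_mono)
  also have "\<dots> \<le> length rs" by (rule card_length)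
  finally show ?thesis using le rs(2) by simp
qed

lemma longest_wk:
  assumes "2*k \<le> n"
  shows "longest_parabolic n ((\<lambda>j. 2*j) ` {..<k}) (wk k)"
proof -
  let ?J = "(\<lambda>j. 2*j) ` {..<k}"
  have w: "is_word n (map (\<lambda>j. 2*j) [0..<k])" using assms by (auto simp: is_word_def)
  have "set (map (\<lambda>j. 2*j) [0..<k]) \<subseteq> ?J" by auto
  then have "wk k \<in> parabolic n ?J" unfolding parabolic_def wk_def using w by blast
  moreover have "coxeter_length n u \<le> coxeter_length n (wk k)" if uP: "u \<in> parabolic n ?J" for u
  proof -
    obtain ws where ws: "is_word n ws" "set ws \<subseteq> ?J" "u = word_perm ws"
      using uP unfolding parabolic_def by blast
    have "\<forall>i\<in>set ws. \<forall>j\<in>set ws. sref i \<circ> sref j = sref j \<circ> sref i"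
    proof (intro ballI)
      fix i j assume "i \<in> set ws" "j \<in> set ws"
      then obtain a b where "i = 2*a" "j = 2*b" using ws(2) by blast
      then show "sref i \<circ> sref j = sref j \<circ> sref i"
      proof (cases "a = b")
        case True then show ?thesis using \<open>i = 2*a\<close> \<open>j = 2*b\<close> by simp
      next
        case False
        then have "i \<noteq> j" "Suc i \<noteq> j" "Suc j \<noteq> i" using \<open>i = 2*a\<close> \<open>j = 2*b\<close> by presburger+
        then show ?thesis by (rule sref_comm)
      qed
    qed
    from reduce_word[OF this] obtain ds where ds: "distinct ds" "set ds \<subseteq> set ws" "word_perm ds = word_perm ws"
      by blast
    have "is_word n ds" using ws(1) ds(2) by (auto simp: is_word_def)
    then have "coxeter_length n u \<le> length ds" using cl_le ds(3) ws(3) by metis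
    also have "length ds = card (set ds)" using ds(1) by (simp add: distinct_card)
    also have "\<dots> \<le> card ?J" using ds(2) ws(2) by (intro card_mono) auto
    also have "\<dots> \<le> k" using card_image_le[of "{..<k}" "\<lambda>j. 2*j"] by simp
    finally show ?thesis using cl_wk[OF assms] by simp
  qed
  ultimately show ?thesis unfolding longest_parabolic_def by blast
qed

theorem corollary6p6:
  fixes n :: nat and v :: "nat \<Rightarrow> nat" and a :: "(nat \<Rightarrow> nat) \<Rightarrow> nat"
  assumes "v permutes {..<n}"
    and "is_a_function n a"
    and "boolean_perm n v"
  shows "a v = lambda2 n v"
proof -
  obtain ws where ws: "reduced_word n v ws" using reduced_exists[OF assms(1)] by blast
  then have "distinct ws" using assms(3) by (simp add: boolean_perm_def)
  then have "F321 n (word_perm ws)" by (rule F321_word)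
  then have F: "F321 n v" using ws by (simp add: reduced_word_def)
  obtain k where k: "2*k \<le> n" "rs_shape n v = shapeof n k" "lambda2 n v = k"
    using v_shape[OF assms(1) F] by blast
  have wp: "wk k permutes {..<n}" unfolding wk_def
    by (rule word_permutes) (use k(1) in \<open>auto simp: is_word_def\<close>)
  have A1: "\<And>v w. v permutes {..<n} \<Longrightarrow> w permutes {..<n} \<Longrightarrow> rs_shape n v = rs_shape n w \<Longrightarrow> a v = a w"
    using assms(2) unfolding is_a_function_def by blast
  have A2: "\<And>J w. J \<subseteq> {i. Suc i < n} \<Longrightarrow> longest_parabolic n J w \<Longrightarrow> a w = coxeter_length n w"
    using assms(2) unfolding is_a_function_def by blast
  have J: "(\<lambda>j. 2*j) ` {..<k} \<subseteq> {i. Suc i < n}" using k(1) by auto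
  have A1: "\<And>v w. v permutes {..<n} \<Longrightarrow> w permutes {..<n} \<Longrightarrow> rs_shape n v = rs_shape n w \<Longrightarrow> a v = a w"
    using assms(2) unfolding is_a_function_def by blast
  have A2: "\<And>J w. J \<subseteq> {i. Suc i < n} \<Longrightarrow> longest_parabolic n J w \<Longrightarrow> a w = coxeter_length n w"
    using assms(2) unfolding is_a_function_def by blast
  have J: "(\<lambda>j. 2*j) ` {..<k} \<subseteq> {i. Suc i < n}" using k(1) by auto
  have "a v = a (wk k)"
    using A1[OF assms(1) wp] k(2) wk_shape[OF k(1)] by simp
  also have "\<dots> = coxeter_length n (wk k)"
    by (rule A2[OF J longest_wk[OF k(1)]])
  also have "\<dots> = k" by (rule cl_wk[OF k(1)])
  finally show ?thesis using k(3) by simp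
qed


end
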